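(* For any loxodromic element $r\in\mathrm{Spin}(1,n)$ we have \[\ell(r)\ \geq\ 2\cosh^{-1}(|r_{\mathbb{R}}|).\]
   Context: Let $\tilde Q=y_0^2-y_1^2-\cdots-y_n^2$ on $E=\mathbb{R}^{n+1}$ with orthogonal basis $e_0,\dots,e_n$. The Clifford algebra $\mathscr{C}(\tilde Q,\mathbb{R})$ is the tensor algebra of $E$ modulo the relations $x\otimes y+y\otimes x=2\Phi(x,y)$ ($\Phi$ the bilinear form of $\tilde Q$); it has basis $e_M=e_{\mu_1}\cdots e_{\mu_\nu}$ for subsets $M=\{\mu_1<\dots<\mu_\nu\}$ (with $e_\emptyset=1$), and every $s$ is uniquely $s=s_{\mathbb{R}}\cdot 1+\sum_{M\neq\emptyset}s_Me_M$; $s_{\mathbb{R}}$ is the real part of $s$. The anti-involution $*$ is defined by $e_M^*=(-1)^{\nu(\nu-1)/2}e_M$, $\nu=|M|$. The even subalgebra $\mathscr{C}^+$ is spanned by $e_M$ with $|M|$ even, and $\mathrm{Spin}(1,n)=\{s\in\mathscr{C}^+ : sEs^*\subseteq E,\ ss^*=1\}$. Each $s\in \mathrm{Spin}(1,n)$ acts on hyperbolic $n$-space (the sheet with $y_0>0$ of $\{\tilde Q=1\}$, with the induced metric from $-\tilde Q$) by the orientation-preserving isometry $\varphi_s(x)=sxs^*$; $s$ is called loxodromic if $\varphi_s$ fixes exactly two points on the boundary at infinity, and $\ell(s)=\inf_x d(x,\varphi_s(x))$ is its translation length. *)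

theory Defs
  imports Complex_Main
begin

text \<open>Clifford algebra of Q = y0^2 - y1^2 - ... - yn^2 on R^(n+1), basis e_0..e_n.
  An element is represented by its coefficient function M \<mapsto> s_M on subsets
  M of {0..n}; coefficients outside Pow {0..n} are 0 for genuine elements.\<close>

type_synonym cl = "nat set \<Rightarrow> real"

text \<open>Sign in e_M e_N = blade_sign M N * e_(M symdiff N), for an orthogonal basis
  with e_0^2 = 1 and e_i^2 = -1 (i \<ge> 1).\<close>
definition blade_sign :: "nat set \<Rightarrow> nat set \<Rightarrow> real" where
  "blade_sign M N =
     (-1) ^ card {(i, j). i \<in> M \<and> j \<in> N \<and> j < i} * (-1) ^ card (M \<inter> N - {0})"

definition clmul :: "nat \<Rightarrow> cl \<Rightarrow> cl \<Rightarrow> cl" where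
  "clmul n s t = (\<lambda>K. \<Sum>M\<in>Pow {0..n}. \<Sum>N\<in>Pow {0..n}.
      if (M - N) \<union> (N - M) = K then s M * t N * blade_sign M N else 0)"

definition clone :: cl where
  "clone = (\<lambda>M. if M = {} then 1 else 0)"

definition clstar :: "cl \<Rightarrow> cl" where
  "clstar s = (\<lambda>M. (-1) ^ (card M * (card M - 1) div 2) * s M)"

definition re_part :: "cl \<Rightarrow> real" where
  "re_part s = s {}"

text \<open>Vectors of E = R^(n+1) are functions nat \<Rightarrow> real vanishing above n.\<close>
definition vec_cl :: "nat \<Rightarrow> (nat \<Rightarrow> real) \<Rightarrow> cl" where
  "vec_cl n x = (\<lambda>M. \<Sum>i\<le>n. if M = {i} then x i else 0)"

definition cl_vec :: "nat \<Rightarrow> cl \<Rightarrow> (nat \<Rightarrow> real)" where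
  "cl_vec n s = (\<lambda>i. if i \<le> n then s {i} else 0)"

definition in_E :: "nat \<Rightarrow> (nat \<Rightarrow> real) \<Rightarrow> bool" where
  "in_E n x \<longleftrightarrow> (\<forall>i>n. x i = 0)"

definition Ecl :: "nat \<Rightarrow> cl set" where
  "Ecl n = {t. \<forall>M. t M \<noteq> 0 \<longrightarrow> card M = 1 \<and> M \<subseteq> {0..n}}"

definition Spin :: "nat \<Rightarrow> cl set" where
  "Spin n = {s. (\<forall>M. \<not> M \<subseteq> {0..n} \<longrightarrow> s M = 0)
              \<and> (\<forall>M. odd (card M) \<longrightarrow> s M = 0)
              \<and> (\<forall>x. in_E n x \<longrightarrow> clmul n (clmul n s (vec_cl n x)) (clstar s) \<in> Ecl n)
              \<and> clmul n s (clstar s) = clone}"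

definition Phi :: "nat \<Rightarrow> (nat \<Rightarrow> real) \<Rightarrow> (nat \<Rightarrow> real) \<Rightarrow> real" where
  "Phi n x y = x 0 * y 0 - (\<Sum>i=1..n. x i * y i)"

definition act :: "nat \<Rightarrow> cl \<Rightarrow> (nat \<Rightarrow> real) \<Rightarrow> (nat \<Rightarrow> real)" where
  "act n s x = cl_vec n (clmul n (clmul n s (vec_cl n x)) (clstar s))"

definition Hyp :: "nat \<Rightarrow> (nat \<Rightarrow> real) set" where
  "Hyp n = {x. in_E n x \<and> x 0 > 0 \<and> Phi n x x = 1}"

definition hdist :: "nat \<Rightarrow> (nat \<Rightarrow> real) \<Rightarrow> (nat \<Rightarrow> real) \<Rightarrow> real" where
  "hdist n x y = arcosh (Phi n x y)"

text \<open>Boundary at infinity: future null rays, each represented by its unique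
  representative with v_0 = 1.\<close>
definition bdry :: "nat \<Rightarrow> (nat \<Rightarrow> real) set" where
  "bdry n = {v. in_E n v \<and> v 0 = 1 \<and> Phi n v v = 0}"

text \<open>Boundary points fixed by the (linear extension of) phi_s: s v s^* lies on the ray of v.\<close>
definition fixed_bdry :: "nat \<Rightarrow> cl \<Rightarrow> (nat \<Rightarrow> real) set" where
  "fixed_bdry n s = {v \<in> bdry n. \<exists>c>0. act n s v = (\<lambda>i. c * v i)}"

definition loxodromic :: "nat \<Rightarrow> cl \<Rightarrow> bool" where
  "loxodromic n s \<longleftrightarrow> finite (fixed_bdry n s) \<and> card (fixed_bdry n s) = 2"

definition transl_len :: "nat \<Rightarrow> cl \<Rightarrow> real" where
  "transl_len n s = (INF x\<in>Hyp n. hdist n x (act n s x))"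

end

theory Submission
  imports Defs
begin

abbreviation symd :: "'a set \<Rightarrow> 'a set \<Rightarrow> 'a set" where
  "symd M N \<equiv> (M - N) \<union> (N - M)"

definition prs :: "nat set \<Rightarrow> nat set \<Rightarrow> (nat \<times> nat) set" where
  "prs M N = {(i, j). i \<in> M \<and> j \<in> N \<and> j < i}"

lemma blade_sign_prs: "blade_sign M N = (-1) ^ card (prs M N) * (-1) ^ card (M \<inter> N - {0})"
  unfolding blade_sign_def prs_def by simp

lemma finite_prs: "finite M \<Longrightarrow> finite N \<Longrightarrow> finite (prs M N)"
  unfolding prs_def by (rule finite_subset[of _ "M \<times> N"]) auto

lemma card_symd_parity:
  assumes "finite A" "finite B"
  shows "card A + card B = card (symd A B) + 2 * card (A \<inter> B)"
proof -
  have "symd A B = (A \<union> B) - (A \<inter> B)" by auto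
  moreover have "card ((A \<union> B) - (A \<inter> B)) = card (A \<union> B) - card (A \<inter> B)"
    by (rule card_Diff_subset) (use assms in auto)
  ultimately have "card (symd A B) = card (A \<union> B) - card (A \<inter> B)" by simp
  moreover have "card (A \<union> B) + card (A \<inter> B) = card A + card B"
    using assms card_Un_Int by metis
  moreover have "card (A \<inter> B) \<le> card (A \<union> B)"
    using assms by (intro card_mono) auto
  ultimately show ?thesis by linarith
qed

lemma sg_symd:
  assumes "finite A" "finite B"
  shows "(-1::real) ^ card (symd A B) = (-1) ^ card A * (-1) ^ card B"
proof -
  have "(-1::real) ^ card A * (-1) ^ card B = (-1) ^ (card (symd A B) + 2 * card (A \<inter> B))"
    by (simp add: power_add[symmetric] card_symd_parity[OF assms])
  also have "\<dots> = (-1) ^ card (symd A B)" by (simp add: power_add power_mult)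
  finally show ?thesis by simp
qed

lemma bs_left:
  assumes "finite M" "finite N" "finite K"
  shows "blade_sign (symd M N) K = blade_sign M K * blade_sign N K"
proof -
  have 1: "prs (symd M N) K = symd (prs M K) (prs N K)" unfolding prs_def by auto
  have 2: "symd M N \<inter> K - {0} = symd (M \<inter> K - {0}) (N \<inter> K - {0})" by auto
  show ?thesis unfolding blade_sign_prs 1 2
    using assms by (simp add: sg_symd finite_prs)
qed

lemma bs_right:
  assumes "finite M" "finite N" "finite K"
  shows "blade_sign M (symd N K) = blade_sign M N * blade_sign M K"
proof -
  have 1: "prs M (symd N K) = symd (prs M N) (prs M K)" unfolding prs_def by auto
  have 2: "M \<inter> symd N K - {0} = symd (M \<inter> N - {0}) (M \<inter> K - {0})" by auto
  show ?thesis unfolding blade_sign_prs 1 2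
    using assms by (simp add: sg_symd finite_prs)
qed

lemma neg1_sq: "(-1::real)^p * (-1)^p = 1"
proof -
  have "(-1::real)^p*(-1)^p = (-1)^(2*p)" by (simp add: mult_2 power_add)
  then show ?thesis by (simp add: power_mult)
qed

lemma bs_sq: "blade_sign M N * blade_sign M N = 1"
proof -
  have "blade_sign M N * blade_sign M N = ((-1::real) ^ card (prs M N) * (-1) ^ card (prs M N)) * ((-1) ^ card (M \<inter> N - {0}) * (-1) ^ card (M \<inter> N - {0}))"
    unfolding blade_sign_prs by (simp add: mult_ac)
  then show ?thesis by (simp add: neg1_sq)
qed

lemma prs_swap_card:
  assumes "finite M" "finite N"
  shows "card (prs M N) + card (prs N M) + card (M \<inter> N) = card M * card N"
proof -
  have e: "M \<times> N = prs M N \<union> (prod.swap ` prs N M) \<union> ((\<lambda>i. (i,i)) ` (M \<inter> N))"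
    unfolding prs_def by auto
  have f: "finite (prs M N)" "finite (prs N M)" using assms finite_prs by auto
  have c2: "card (prod.swap ` prs N M) = card (prs N M)"
    by (rule card_image) (auto simp add: inj_on_def)
  have c3: "card ((\<lambda>i. (i,i)) ` (M \<inter> N)) = card (M \<inter> N)"
    by (rule card_image) (simp add: inj_on_def)
  have "card (M \<times> N) = card (prs M N) + card (prod.swap ` prs N M) + card ((\<lambda>i. (i,i)) ` (M \<inter> N))"
    unfolding e
    apply (subst card_Un_disjoint)
    using f assms apply (auto simp: prs_def)[3]
    apply (subst card_Un_disjoint)
    using f assms apply (auto simp: prs_def)
    done
  then show ?thesis using c2 c3 by (simp add: card_cartesian_product)
qed

definition rs :: "nat \<Rightarrow> real" where
  "rs p = (-1) ^ (p * (p - 1) div 2)"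

lemma tri_suc: "Suc p * p div 2 = p * (p - 1) div 2 + p"
proof (cases p)
  case 0 then show ?thesis by simp
next
  case (Suc q)
  have "Suc p * p = p * (p - 1) + 2 * p" using Suc by (simp add: algebra_simps)
  then show ?thesis by simp
qed

lemma rs_Suc: "rs (Suc p) = rs p * (-1) ^ p"
proof -
  have "Suc p * (Suc p - 1) div 2 = p * (p - 1) div 2 + p" using tri_suc by simp
  then show ?thesis unfolding rs_def by (simp only: power_add)
qed

lemma rs_add: "rs (a + b) = rs a * rs b * (-1) ^ (a * b)"
proof (induction b)
  case 0 then show ?case by (simp add: rs_def)
next
  case (Suc b)
  have "rs (a + Suc b) = rs (a + b) * (-1) ^ (a + b)" by (simp add: rs_Suc)
  also have "\<dots> = rs a * rs b * (-1) ^ (a * b) * (-1) ^ (a + b)" using Suc by simp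
  also have "\<dots> = rs a * (rs b * (-1) ^ b) * (-1) ^ (a * Suc b)"
    by (simp add: power_add mult_ac)
  also have "\<dots> = rs a * rs (Suc b) * (-1) ^ (a * Suc b)" by (simp add: rs_Suc)
  finally show ?case .
qed

lemma rs_sq: "rs p * rs p = 1"
  unfolding rs_def by (rule neg1_sq)

lemma neg1_even_eq: "even (a + b) \<Longrightarrow> (-1::real) ^ a = (-1) ^ b"
  by (cases "even a") (auto simp: neg_one_even_power neg_one_odd_power)

lemma bs_diag:
  assumes "finite M"
  shows "blade_sign M M * rs (card M) = (-1) ^ card (M - {0})"
proof -
  have "2 * card (prs M M) + card M = card M * card M"
    using prs_swap_card[OF assms assms] by simp
  then have "card (prs M M) = card M * (card M - 1) div 2"
    by (cases "card M") (auto simp: algebra_simps)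
  then have "(-1::real) ^ card (prs M M) = rs (card M)" by (simp add: rs_def)
  then show ?thesis unfolding blade_sign_prs using rs_sq[of "card M"]
    by (simp add: mult_ac)
qed

lemma bs_star:
  assumes "finite M" "finite N"
  shows "rs (card (symd M N)) * blade_sign M N = rs (card N) * rs (card M) * blade_sign N M"
proof -
  define m where "m = card (M - N)"
  define k where "k = card (N - M)"
  define c where "c = card (M \<inter> N)"
  have cM: "card M = m + c"
  proof -
    have "card M = card ((M - N) \<union> (M \<inter> N))" by (simp add: Un_Diff_Int)
    also have "\<dots> = card (M - N) + card (M \<inter> N)" by (rule card_Un_disjoint) (use assms in auto)
    finally show ?thesis unfolding m_def c_def .
  qed
  have cN: "card N = k + c"
  proof -
    have "(N - M) \<union> (M \<inter> N) = N" by blast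
    then have "card N = card ((N - M) \<union> (M \<inter> N))" by simp
    also have "\<dots> = card (N - M) + card (M \<inter> N)" by (rule card_Un_disjoint) (use assms in auto)
    finally show ?thesis unfolding k_def c_def .
  qed
  have cS: "card (symd M N) = m + k" unfolding m_def k_def using assms
    by (subst card_Un_disjoint) auto
  have pp: "card (prs M N) + card (prs N M) + c = (m + c) * (k + c)"
    using prs_swap_card[OF assms] cM cN c_def by simp
  define t where "t = (-1::real) ^ card (M \<inter> N - {0})"
  have t2: "t * t = 1" unfolding t_def by (rule neg1_sq)
  have sMN: "blade_sign M N = (-1) ^ card (prs M N) * t" unfolding blade_sign_prs t_def ..
  have sNM: "blade_sign N M = (-1) ^ card (prs N M) * t" unfolding blade_sign_prs t_def
    by (simp add: Int_commute)
  have e1: "(-1::real) ^ card (prs M N) = (-1) ^ card (prs N M) * (-1) ^ (card (prs M N) + card (prs N M))"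
    using neg1_sq[of "card (prs N M)"] by (simp add: power_add mult_ac)
  have e2: "(-1::real) ^ (card (prs M N) + card (prs N M)) = (-1) ^ ((m + c) * (k + c) + c)"
    by (rule neg1_even_eq) (use pp in presburger)
  have e3: "(-1::real) ^ (m * k) * (-1) ^ ((m + c) * (k + c) + c) = (-1) ^ (m * c) * (-1) ^ (k * c)"
    unfolding power_add[symmetric]
    by (rule neg1_even_eq) (simp add: algebra_simps)
  have "rs (card (symd M N)) * blade_sign M N
      = rs m * rs k * ((-1) ^ (m * k) * (-1) ^ ((m + c) * (k + c) + c)) * ((-1) ^ card (prs N M) * t)"
    unfolding cS rs_add sMN e1 e2 by (simp add: mult_ac)
  also have "\<dots> = rs m * rs k * ((-1) ^ (m * c) * (-1) ^ (k * c)) * ((-1) ^ card (prs N M) * t)"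
    unfolding e3 ..
  also have "\<dots> = rs (card N) * rs (card M) * blade_sign N M"
    unfolding cM cN rs_add sNM using rs_sq[of c]
    by (simp add: mult_ac)
  finally show ?thesis .
qed

definition supp :: "nat \<Rightarrow> cl \<Rightarrow> bool" where
  "supp n s \<longleftrightarrow> (\<forall>M. \<not> M \<subseteq> {0..n} \<longrightarrow> s M = 0)"

definition cadd :: "cl \<Rightarrow> cl \<Rightarrow> cl" where
  "cadd s t = (\<lambda>M. s M + t M)"

definition csc :: "real \<Rightarrow> cl \<Rightarrow> cl" where
  "csc c s = (\<lambda>M. c * s M)"

lemma symd_eq_iff: "symd M N = K \<longleftrightarrow> N = symd M K"
  by auto

lemma symd_sub: "M \<subseteq> {0..n} \<Longrightarrow> (symd M K \<subseteq> {0..n}) = (K \<subseteq> {0..n})"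
  by auto

lemma clmul_alt:
  "clmul n s t K = (if K \<subseteq> {0..n} then
     (\<Sum>M\<in>Pow {0..n}. s M * t (symd M K) * blade_sign M (symd M K)) else 0)"
proof -
  have "(\<Sum>N\<in>Pow {0..n}. if symd M N = K then s M * t N * blade_sign M N else 0)
      = (if K \<subseteq> {0..n} then s M * t (symd M K) * blade_sign M (symd M K) else 0)"
    if "M \<in> Pow {0..n}" for M
  proof -
    have "(\<Sum>N\<in>Pow {0..n}. if symd M N = K then s M * t N * blade_sign M N else 0)
      = (\<Sum>N\<in>Pow {0..n}. if N = symd M K then s M * t N * blade_sign M N else 0)"
      by (rule sum.cong) (auto simp only: symd_eq_iff)
    also have "\<dots> = (if symd M K \<in> Pow {0..n} then s M * t (symd M K) * blade_sign M (symd M K) else 0)"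
      by (rule sum.delta) simp
    finally show ?thesis using that symd_sub[of M n K] by simp
  qed
  then show ?thesis unfolding clmul_def
    by (cases "K \<subseteq> {0..n}") (auto intro: sum.neutral)
qed

lemma clmul_supp: "supp n (clmul n s t)"
  unfolding supp_def by (simp add: clmul_alt)

lemma clmul_re: "clmul n s t {} = (\<Sum>M\<in>Pow {0..n}. s M * t M * blade_sign M M)"
  by (simp add: clmul_alt)

lemma clmul_re_comm: "clmul n s t {} = clmul n t s {}"
  unfolding clmul_re by (simp add: mult_ac)

lemma symd_symd [simp]: "symd M (symd M A) = A"
  by auto

lemma sum_reindex_symd:
  assumes "M \<subseteq> {0..n}"
  shows "(\<Sum>L\<in>Pow {0..n}. f L) = (\<Sum>N\<in>Pow {0..n}. f (symd M N))"
  by (rule sum.reindex_bij_witness[of _ "symd M" "symd M"]) (use assms in \<open>auto simp del: Un_iff\<close>)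

lemma clmul_assoc: "clmul n (clmul n a b) c = clmul n a (clmul n b c)"
proof
  fix K
  show "clmul n (clmul n a b) c K = clmul n a (clmul n b c) K"
  proof (cases "K \<subseteq> {0..n}")
    case False then show ?thesis by (simp add: clmul_alt)
  next
    case K: True
    let ?P = "Pow {0..n}"
    have fin: "finite X" if "X \<in> ?P" for X using that finite_subset by auto
    have "clmul n (clmul n a b) c K = (\<Sum>L\<in>?P. (\<Sum>M\<in>?P. a M * b (symd M L) * blade_sign M (symd M L)) * c (symd L K) * blade_sign L (symd L K))"
      using K by (simp add: clmul_alt)
    also have "\<dots> = (\<Sum>L\<in>?P. \<Sum>M\<in>?P. a M * b (symd M L) * blade_sign M (symd M L) * c (symd L K) * blade_sign L (symd L K))"
      by (simp add: sum_distrib_right)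
    also have "\<dots> = (\<Sum>M\<in>?P. \<Sum>L\<in>?P. a M * b (symd M L) * blade_sign M (symd M L) * c (symd L K) * blade_sign L (symd L K))"
      by (rule sum.swap)
    also have "\<dots> = (\<Sum>M\<in>?P. \<Sum>N\<in>?P. a M * b N * blade_sign M N * c (symd (symd M N) K) * blade_sign (symd M N) (symd (symd M N) K))"
    proof (rule sum.cong[OF refl])
      fix M assume "M \<in> ?P"
      then show "(\<Sum>L\<in>?P. a M * b (symd M L) * blade_sign M (symd M L) * c (symd L K) * blade_sign L (symd L K))
        = (\<Sum>N\<in>?P. a M * b N * blade_sign M N * c (symd (symd M N) K) * blade_sign (symd M N) (symd (symd M N) K))"
        by (subst sum_reindex_symd[of M n]) (simp_all only: symd_symd Pow_iff)
    qed
    also have "\<dots> = (\<Sum>M\<in>?P. \<Sum>N\<in>?P. a M * b N * c (symd N (symd M K)) * blade_sign N (symd N (symd M K)) * blade_sign M (symd M K))"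
    proof (intro sum.cong refl)
      fix M N assume M: "M \<in> ?P" and N: "N \<in> ?P"
      define P where "P = symd (symd M N) K"
      have fK: "finite K" using K finite_subset by auto
      have fP: "finite P" unfolding P_def using fin[OF M] fin[OF N] fK by auto
      have e1: "symd N (symd M K) = P" unfolding P_def by auto
      have e2: "symd M K = symd N P" unfolding P_def by auto
      have s1: "blade_sign (symd M N) P = blade_sign M P * blade_sign N P"
        using bs_left fin[OF M] fin[OF N] fP by auto
      have s2: "blade_sign M (symd N P) = blade_sign M N * blade_sign M P"
        using bs_right fin[OF M] fin[OF N] fP by auto
      show "a M * b N * blade_sign M N * c (symd (symd M N) K) * blade_sign (symd M N) (symd (symd M N) K)
          = a M * b N * c (symd N (symd M K)) * blade_sign N (symd N (symd M K)) * blade_sign M (symd M K)"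
        unfolding e1 e2 P_def[symmetric] s1 s2 by (simp add: mult_ac)
    qed
    also have "\<dots> = (\<Sum>M\<in>?P. a M * clmul n b c (symd M K) * blade_sign M (symd M K))"
    proof (rule sum.cong[OF refl])
      fix M assume M: "M \<in> ?P"
      then have "symd M K \<subseteq> {0..n}" using K by auto
      then show "(\<Sum>N\<in>?P. a M * b N * c (symd N (symd M K)) * blade_sign N (symd N (symd M K)) * blade_sign M (symd M K))
         = a M * clmul n b c (symd M K) * blade_sign M (symd M K)"
        by (simp add: clmul_alt sum_distrib_left sum_distrib_right mult_ac)
    qed
    also have "\<dots> = clmul n a (clmul n b c) K"
      using K by (simp add: clmul_alt)
    finally show ?thesis .
  qed
qed

lemma clmul_cadd_left: "clmul n (cadd a b) c = cadd (clmul n a c) (clmul n b c)"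
  by (rule ext) (simp add: clmul_alt cadd_def algebra_simps sum.distrib)

lemma clmul_cadd_right: "clmul n a (cadd b c) = cadd (clmul n a b) (clmul n a c)"
  by (rule ext) (simp add: clmul_alt cadd_def algebra_simps sum.distrib)

lemma clmul_csc_left: "clmul n (csc k a) b = csc k (clmul n a b)"
  by (rule ext) (simp add: clmul_alt csc_def sum_distrib_left mult_ac)

lemma clmul_csc_right: "clmul n a (csc k b) = csc k (clmul n a b)"
  by (rule ext) (simp add: clmul_alt csc_def sum_distrib_left mult_ac)

lemma bs_empty_left: "blade_sign {} K = 1"
  unfolding blade_sign_def by simp

lemma bs_empty_right: "blade_sign K {} = 1"
  unfolding blade_sign_def by simp

lemma clone_left: "supp n s \<Longrightarrow> clmul n clone s = s"
proof (rule ext)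
  fix K assume s: "supp n s"
  show "clmul n clone s K = s K"
  proof (cases "K \<subseteq> {0..n}")
    case True
    have "(\<Sum>M\<in>Pow {0..n}. clone M * s (symd M K) * blade_sign M (symd M K))
        = (\<Sum>M\<in>Pow {0..n}. if M = {} then s K else 0)"
      by (rule sum.cong) (auto simp: clone_def bs_empty_left)
    also have "\<dots> = s K" by (simp add: sum.delta)
    finally show ?thesis using True by (simp add: clmul_alt)
  next
    case False then show ?thesis using s by (simp add: clmul_alt supp_def)
  qed
qed

lemma clone_right: "supp n s \<Longrightarrow> clmul n s clone = s"
proof (rule ext)
  fix K assume s: "supp n s"
  show "clmul n s clone K = s K"
  proof (cases "K \<subseteq> {0..n}")
    case True
    have "(\<Sum>M\<in>Pow {0..n}. s M * clone (symd M K) * blade_sign M (symd M K))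
        = (\<Sum>M\<in>Pow {0..n}. if M = K then s K else 0)"
    proof (rule sum.cong[OF refl])
      fix M
      have "symd M K = {} \<longleftrightarrow> M = K" by auto
      then show "s M * clone (symd M K) * blade_sign M (symd M K) = (if M = K then s K else 0)"
        by (auto simp: clone_def bs_empty_right)
    qed
    also have "\<dots> = s K" using True by (simp add: sum.delta')
    finally show ?thesis using True by (simp add: clmul_alt)
  next
    case False then show ?thesis using s by (simp add: clmul_alt supp_def)
  qed
qed

lemma clstar_rs: "clstar s = (\<lambda>M. rs (card M) * s M)"
  unfolding clstar_def rs_def ..

lemma clstar_clstar: "clstar (clstar s) = s"
  unfolding clstar_rs by (simp add: mult.assoc[symmetric] rs_sq)

lemma clstar_cadd: "clstar (cadd a b) = cadd (clstar a) (clstar b)"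
  unfolding clstar_rs cadd_def by (simp add: algebra_simps)

lemma clstar_csc: "clstar (csc k a) = csc k (clstar a)"
  unfolding clstar_rs csc_def by (simp add: algebra_simps)

lemma clstar_clone: "clstar clone = clone"
  unfolding clstar_rs clone_def by (auto simp: rs_def)

lemma clstar_vec: "clstar (vec_cl n x) = vec_cl n x"
proof (rule ext)
  fix M
  show "clstar (vec_cl n x) M = vec_cl n x M"
  proof (cases "card M = 1")
    case True then show ?thesis unfolding clstar_rs by (simp add: rs_def)
  next
    case False
    then have "vec_cl n x M = 0" unfolding vec_cl_def by (auto intro!: sum.neutral)
    then show ?thesis unfolding clstar_rs by simp
  qed
qed

lemma clstar_supp: "supp n s \<Longrightarrow> supp n (clstar s)"
  unfolding supp_def clstar_rs by simp

lemma cadd_supp: "supp n s \<Longrightarrow> supp n t \<Longrightarrow> supp n (cadd s t)"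
  unfolding supp_def cadd_def by simp

lemma csc_supp: "supp n s \<Longrightarrow> supp n (csc k s)"
  unfolding supp_def csc_def by simp

lemma clone_supp: "supp n clone"
  unfolding supp_def clone_def by auto

lemma vec_supp: "supp n (vec_cl n x)"
  unfolding supp_def vec_cl_def by (auto intro!: sum.neutral)

lemma clstar_mul: "clstar (clmul n s t) = clmul n (clstar t) (clstar s)"
proof (rule ext)
  fix K
  show "clstar (clmul n s t) K = clmul n (clstar t) (clstar s) K"
  proof (cases "K \<subseteq> {0..n}")
    case False then show ?thesis by (simp add: clstar_rs clmul_alt)
  next
    case K: True
    let ?P = "Pow {0..n}"
    have "clmul n (clstar t) (clstar s) K
       = (\<Sum>N\<in>?P. rs (card N) * t N * (rs (card (symd N K)) * s (symd N K)) * blade_sign N (symd N K))"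
      using K by (simp add: clmul_alt clstar_rs)
    also have "\<dots> = (\<Sum>M\<in>?P. rs (card (symd K M)) * t (symd K M) * (rs (card (symd (symd K M) K)) * s (symd (symd K M) K)) * blade_sign (symd K M) (symd (symd K M) K))"
      by (rule sum_reindex_symd[OF K])
    also have "\<dots> = (\<Sum>M\<in>?P. rs (card K) * (s M * t (symd M K) * blade_sign M (symd M K)))"
    proof (rule sum.cong[OF refl])
      fix M assume M: "M \<in> ?P"
      define N where "N = symd M K"
      have e1: "symd K M = N" unfolding N_def by auto
      have e2: "symd (symd K M) K = M" by auto
      have e3: "K = symd M N" unfolding N_def by auto
      have fM: "finite M" using M finite_subset by auto
      have fK: "finite K" using K finite_subset by auto
      have fN: "finite N" unfolding N_def using fM fK by auto
      have st: "rs (card (symd M N)) * blade_sign M N = rs (card N) * rs (card M) * blade_sign N M"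
        by (rule bs_star[OF fM fN])
      show "rs (card (symd K M)) * t (symd K M) * (rs (card (symd (symd K M) K)) * s (symd (symd K M) K)) * blade_sign (symd K M) (symd (symd K M) K)
          = rs (card K) * (s M * t (symd M K) * blade_sign M (symd M K))"
      proof -
        have st': "rs (card K) * blade_sign M N = rs (card N) * rs (card M) * blade_sign N M"
          using st by (simp only: e3[symmetric])
        have "rs (card K) * (s M * t N * blade_sign M N) = s M * t N * (rs (card K) * blade_sign M N)"
          by (simp add: mult_ac)
        also have "\<dots> = s M * t N * (rs (card N) * rs (card M) * blade_sign N M)" by (simp only: st')
        finally have X: "rs (card K) * (s M * t N * blade_sign M N) = s M * t N * (rs (card N) * rs (card M) * blade_sign N M)" .
        have L: "rs (card N) * t N * (rs (card M) * s M) * blade_sign N M = s M * t N * (rs (card N) * rs (card M) * blade_sign N M)"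
          by (simp add: mult_ac)
        show ?thesis unfolding e2 unfolding e1 N_def[symmetric] by (rule trans[OF L X[symmetric]])
      qed
    qed
    also have "\<dots> = clstar (clmul n s t) K"
      using K by (simp add: clmul_alt clstar_rs sum_distrib_left)
    finally show ?thesis by simp
  qed
qed

lemma sum_vec:
  "(\<Sum>M\<in>Pow {0..n}. vec_cl n x M * f M) = (\<Sum>i\<le>n. x i * f {i})"
proof -
  have "(\<Sum>M\<in>Pow {0..n}. vec_cl n x M * f M) = (\<Sum>M\<in>Pow {0..n}. \<Sum>i\<le>n. if M = {i} then x i * f M else 0)"
    unfolding vec_cl_def sum_distrib_right by (intro sum.cong refl) auto
  also have "\<dots> = (\<Sum>i\<le>n. \<Sum>M\<in>Pow {0..n}. if M = {i} then x i * f M else 0)"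
    by (rule sum.swap)
  also have "\<dots> = (\<Sum>i\<le>n. x i * f {i})"
    by (intro sum.cong refl) (simp add: sum.delta)
  finally show ?thesis .
qed

lemma bs_single: "blade_sign {i} {j} = (if j < i then -1 else 1) * (if i = j \<and> i \<noteq> 0 then -1 else 1)"
proof -
  have "prs {i} {j} = (if j < i then {(i,j)} else {})" unfolding prs_def by auto
  moreover have "{i} \<inter> {j} - {0} = (if i = j \<and> i \<noteq> 0 then {i} else {})" by auto
  ultimately show ?thesis unfolding blade_sign_prs by auto
qed

lemma clmul_vec_vec:
  "clmul n (vec_cl n x) (vec_cl n y) K
   = (\<Sum>i\<le>n. x i * (\<Sum>j\<le>n. y j * (if symd {i} {j} = K then blade_sign {i} {j} else 0)))"
proof -
  have "clmul n (vec_cl n x) (vec_cl n y) K = (\<Sum>M\<in>Pow {0..n}. vec_cl n x M *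
      (\<Sum>N\<in>Pow {0..n}. vec_cl n y N * (if symd M N = K then blade_sign M N else 0)))"
    unfolding clmul_def sum_distrib_left by (intro sum.cong refl) auto
  also have "\<dots> = (\<Sum>i\<le>n. x i * (\<Sum>N\<in>Pow {0..n}. vec_cl n y N * (if symd {i} N = K then blade_sign {i} N else 0)))"
    by (rule sum_vec)
  also have "\<dots> = (\<Sum>i\<le>n. x i * (\<Sum>j\<le>n. y j * (if symd {i} {j} = K then blade_sign {i} {j} else 0)))"
    by (simp only: sum_vec)
  finally show ?thesis .
qed

lemma phi_sum: "(\<Sum>i\<le>n. x i * y i * blade_sign {i} {i}) = Phi n x y"
proof -
  have e: "{..n} = insert 0 {1..n}" by auto
  have "(\<Sum>i\<in>{1..n}. x i * y i * blade_sign {i} {i}) = - (\<Sum>i\<in>{1..n}. x i * y i)"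
    by (simp add: bs_single sum_negf[symmetric])
  then show ?thesis unfolding e Phi_def by (simp add: bs_single)
qed

lemma anticomm:
  "cadd (clmul n (vec_cl n x) (vec_cl n y)) (clmul n (vec_cl n y) (vec_cl n x)) = csc (2 * Phi n x y) clone"
proof (rule ext)
  fix K
  let ?f = "\<lambda>i j. x i * y j * (if symd {i} {j} = K then blade_sign {i} {j} + blade_sign {j} {i} else 0)"
  have "cadd (clmul n (vec_cl n x) (vec_cl n y)) (clmul n (vec_cl n y) (vec_cl n x)) K
     = (\<Sum>i\<le>n. \<Sum>j\<le>n. x i * y j * (if symd {i} {j} = K then blade_sign {i} {j} else 0))
       + (\<Sum>j\<le>n. \<Sum>i\<le>n. y j * x i * (if symd {j} {i} = K then blade_sign {j} {i} else 0))"
    unfolding cadd_def clmul_vec_vec by (simp add: sum_distrib_left mult_ac)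
  also have "\<dots> = (\<Sum>i\<le>n. \<Sum>j\<le>n. x i * y j * (if symd {i} {j} = K then blade_sign {i} {j} else 0))
       + (\<Sum>i\<le>n. \<Sum>j\<le>n. y j * x i * (if symd {j} {i} = K then blade_sign {j} {i} else 0))"
    by (subst (2) sum.swap) simp
  also have "\<dots> = (\<Sum>i\<le>n. \<Sum>j\<le>n. ?f i j)"
    unfolding sum.distrib[symmetric]
    by (intro sum.cong refl) (auto simp: algebra_simps Un_commute)
  also have "\<dots> = (\<Sum>i\<le>n. \<Sum>j\<le>n. if j = i then (if K = {} then 2 * (x i * y i * blade_sign {i} {i}) else 0) else 0)"
  proof (intro sum.cong refl)
    fix i j
    show "?f i j = (if j = i then (if K = {} then 2 * (x i * y i * blade_sign {i} {i}) else 0) else 0)"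
    proof (cases "i = j")
      case True then show ?thesis by auto
    next
      case False
      then have "blade_sign {i} {j} + blade_sign {j} {i} = 0" by (auto simp: bs_single)
      then show ?thesis using False by auto
    qed
  qed
  also have "\<dots> = (if K = {} then 2 * Phi n x y else 0)"
    by (simp add: sum.delta' phi_sum[symmetric] sum_distrib_left)
  also have "\<dots> = csc (2 * Phi n x y) clone K"
    by (simp add: csc_def clone_def)
  finally show "cadd (clmul n (vec_cl n x) (vec_cl n y)) (clmul n (vec_cl n y) (vec_cl n x)) K = csc (2 * Phi n x y) clone K" .
qed

lemma vec_sq: "clmul n (vec_cl n x) (vec_cl n x) = csc (Phi n x x) clone"
proof (rule ext)
  fix K
  have "cadd (clmul n (vec_cl n x) (vec_cl n x)) (clmul n (vec_cl n x) (vec_cl n x)) K = csc (2 * Phi n x x) clone K"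
    using anticomm[of n x x] by simp
  then show "clmul n (vec_cl n x) (vec_cl n x) K = csc (Phi n x x) clone K"
    by (simp add: cadd_def csc_def)
qed

lemma re_vec: "clmul n (vec_cl n x) Z {} = Phi n x (cl_vec n Z)"
proof -
  have "clmul n (vec_cl n x) Z {} = (\<Sum>M\<in>Pow {0..n}. vec_cl n x M * (Z M * blade_sign M M))"
    by (simp add: clmul_re mult_ac)
  also have "\<dots> = (\<Sum>i\<le>n. x i * (Z {i} * blade_sign {i} {i}))" by (rule sum_vec)
  also have "\<dots> = (\<Sum>i\<le>n. x i * cl_vec n Z i * blade_sign {i} {i})"
    by (intro sum.cong refl) (simp add: cl_vec_def mult_ac)
  also have "\<dots> = Phi n x (cl_vec n Z)" by (rule phi_sum)
  finally show ?thesis .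
qed

definition e0v :: "nat \<Rightarrow> real" where
  "e0v = (\<lambda>i. if i = 0 then 1 else 0)"

lemma symd_symd' [simp]: "symd (symd K N) K = N"
  by auto

lemma sum_e0v: "(\<Sum>i\<le>n. e0v i * f i) = f 0"
proof -
  have "(\<Sum>i\<le>n. e0v i * f i) = (\<Sum>i\<le>n. if i = 0 then f i else 0)"
    by (intro sum.cong) (auto simp: e0v_def)
  then show ?thesis by (simp add: sum.delta)
qed

lemma E_left: "K \<subseteq> {0..n} \<Longrightarrow>
  clmul n (vec_cl n e0v) w K = w (symd {0} K) * blade_sign {0} (symd {0} K)"
  by (simp add: clmul_alt mult.assoc sum_vec sum_e0v)

lemma E_right:
  assumes K: "K \<subseteq> {0..n}"
  shows "clmul n v (vec_cl n e0v) K = v (symd K {0}) * blade_sign (symd K {0}) {0}"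
proof -
  have "clmul n v (vec_cl n e0v) K = (\<Sum>M\<in>Pow {0..n}. v M * vec_cl n e0v (symd M K) * blade_sign M (symd M K))"
    using K by (simp add: clmul_alt)
  also have "\<dots> = (\<Sum>N\<in>Pow {0..n}. v (symd K N) * vec_cl n e0v (symd (symd K N) K) * blade_sign (symd K N) (symd (symd K N) K))"
    by (rule sum_reindex_symd[OF K])
  also have "\<dots> = (\<Sum>N\<in>Pow {0..n}. vec_cl n e0v N * (v (symd K N) * blade_sign (symd K N) N))"
    by (simp add: mult_ac)
  also have "\<dots> = v (symd K {0}) * blade_sign (symd K {0}) {0}"
    by (simp add: sum_vec sum_e0v)
  finally show ?thesis .
qed

lemma bs_0_left: "blade_sign {0} K = 1"
proof -
  have a: "prs {0} K = {}" unfolding prs_def by auto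
  have b: "{0} \<inter> K - {0} = {}" by auto
  show ?thesis unfolding blade_sign_prs a b by simp
qed

lemma bs_0_right:
  assumes "finite K"
  shows "blade_sign (symd K {0}) {0} = (-1) ^ card (K - {0})"
proof -
  have a: "prs (symd K {0}) {0} = (\<lambda>i. (i, 0)) ` (K - {0})" unfolding prs_def by auto
  have b: "card ((\<lambda>i. (i, 0::nat)) ` (K - {0})) = card (K - {0})"
    by (rule card_image) (auto simp: inj_on_def)
  have c: "symd K {0} \<inter> {0} - {0} = {}" by auto
  show ?thesis unfolding blade_sign_prs a b c by simp
qed

lemma EwE_re:
  "clmul n (clmul n (clmul n (vec_cl n e0v) w) (vec_cl n e0v)) (clstar w) {} = (\<Sum>M\<in>Pow {0..n}. (w M)\<^sup>2)"
  unfolding clmul_re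
proof (rule sum.cong[OF refl])
  fix K assume K: "K \<in> Pow {0..n}"
  then have K': "K \<subseteq> {0..n}" "symd K {0} \<subseteq> {0..n}" by auto
  have fK: "finite K" using K finite_subset by auto
  have e: "symd {0} (symd K {0}) = K" by auto
  have u: "clmul n (clmul n (vec_cl n e0v) w) (vec_cl n e0v) K = w K * (-1) ^ card (K - {0})"
    unfolding E_right[OF K'(1)] E_left[OF K'(2)] e bs_0_left bs_0_right[OF fK] by simp
  have d: "blade_sign K K * rs (card K) = (-1) ^ card (K - {0})" by (rule bs_diag[OF fK])
  have "clmul n (clmul n (vec_cl n e0v) w) (vec_cl n e0v) K * clstar w K * blade_sign K K
      = (w K)\<^sup>2 * ((-1) ^ card (K - {0}) * (blade_sign K K * rs (card K)))"
    unfolding u clstar_rs by (simp add: power2_eq_square mult_ac)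
  also have "\<dots> = (w K)\<^sup>2" unfolding d by (simp add: neg1_sq)
  finally show "clmul n (clmul n (vec_cl n e0v) w) (vec_cl n e0v) K * clstar w K * blade_sign K K = (w K)\<^sup>2" .
qed

lemma ww_re:
  "clmul n w (clstar w) {} = (\<Sum>M\<in>Pow {0..n}. (w M)\<^sup>2 * (-1) ^ card (M - {0}))"
  unfolding clmul_re
proof (rule sum.cong[OF refl])
  fix K assume K: "K \<in> Pow {0..n}"
  have fK: "finite K" using K finite_subset by auto
  show "w K * clstar w K * blade_sign K K = (w K)\<^sup>2 * (-1) ^ card (K - {0})"
    using bs_diag[OF fK] unfolding clstar_rs by (simp add: power2_eq_square mult_ac)
qed

lemma phi_e0_e0: "Phi n e0v e0v = 1"
  unfolding Phi_def e0v_def by simp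

lemma phi_e0_x: "Phi n e0v x = x 0"
  unfolding Phi_def e0v_def by simp

lemma csc_one: "csc 1 s = s"
  unfolding csc_def by simp

lemma sq_cancel:
  assumes "Phi n x x = 1" "supp n Z"
  shows "clmul n (vec_cl n x) (clmul n (vec_cl n x) Z) = Z"
  by (simp add: clmul_assoc[symmetric] vec_sq assms clmul_csc_left csc_one clone_left)

lemma rotor_facts:
  assumes x: "Phi n x x = 1"
  defines "X \<equiv> vec_cl n x" and "E \<equiv> vec_cl n e0v"
  defines "G \<equiv> cadd clone (clmul n X E)" and "G' \<equiv> cadd clone (clmul n E X)"
  shows "clmul n G G' = csc (2 + 2 * x 0) clone"
    and "clmul n G' G = csc (2 + 2 * x 0) clone"
    and "clmul n G (clmul n E G') = csc (2 + 2 * x 0) X"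
    and "clstar G = G'" and "clstar G' = G"
    and "supp n G" and "supp n G'"
proof -
  have sX: "supp n X" and sE: "supp n E" unfolding X_def E_def by (rule vec_supp)+
  have XX: "\<And>Z. supp n Z \<Longrightarrow> clmul n X (clmul n X Z) = Z" unfolding X_def using sq_cancel x by blast
  have EE: "\<And>Z. supp n Z \<Longrightarrow> clmul n E (clmul n E Z) = Z" unfolding E_def using sq_cancel phi_e0_e0 by blast
  have XX1: "clmul n X X = clone" unfolding X_def using vec_sq x csc_one by metis
  have EE1: "clmul n E E = clone" unfolding E_def using vec_sq phi_e0_e0 csc_one by metis
  have Ec: "clmul n E clone = E" "clmul n X clone = X" using clone_right sE sX by auto
  have ac: "\<And>K. clmul n E X K + clmul n X E K = 2 * x 0 * clone K"
    using fun_cong[OF anticomm[of n e0v x]] unfolding X_def E_def by (simp add: cadd_def csc_def phi_e0_x)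
  show "clmul n G G' = csc (2 + 2 * x 0) clone"
  proof (rule ext)
    fix K
    show "clmul n G G' K = csc (2 + 2 * x 0) clone K"
      unfolding G_def G'_def using ac[of K]
      by (simp add: clmul_cadd_left clmul_cadd_right clone_left clone_right clone_supp clmul_supp clmul_assoc EE XX sE sX Ec XX1 EE1) (simp add: cadd_def csc_def algebra_simps)
  qed
  show "clmul n G' G = csc (2 + 2 * x 0) clone"
  proof (rule ext)
    fix K
    show "clmul n G' G K = csc (2 + 2 * x 0) clone K"
      unfolding G_def G'_def using ac[of K]
      by (simp add: clmul_cadd_left clmul_cadd_right clone_left clone_right clone_supp clmul_supp clmul_assoc EE XX sE sX Ec XX1 EE1) (simp add: cadd_def csc_def algebra_simps)
  qed
  show "clmul n G (clmul n E G') = csc (2 + 2 * x 0) X"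
  proof (rule ext)
    fix K
    have h: "clmul n X (cadd (clmul n E X) (clmul n X E)) = cadd (clmul n X (clmul n E X)) E"
      by (simp add: clmul_cadd_right XX sE)
    have "cadd (clmul n E X) (clmul n X E) = csc (2 * x 0) clone"
      using ac by (auto simp: cadd_def csc_def)
    then have "clmul n X (cadd (clmul n E X) (clmul n X E)) = csc (2 * x 0) X"
      by (simp add: clmul_csc_right clone_right sX)
    then have h2: "clmul n X (clmul n E X) K + E K = 2 * x 0 * X K"
      using fun_cong[OF h, of K] by (simp add: cadd_def csc_def)
    show "clmul n G (clmul n E G') K = csc (2 + 2 * x 0) X K"
      unfolding G_def G'_def using h2
      by (simp add: clmul_cadd_left clmul_cadd_right clone_left clone_right clone_supp clmul_supp clmul_assoc EE XX sE sX Ec XX1 EE1) (simp add: cadd_def csc_def algebra_simps)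
  qed
  show "clstar G = G'" unfolding G_def G'_def X_def E_def
    by (simp add: clstar_cadd clstar_clone clstar_mul clstar_vec)
  show "clstar G' = G" unfolding G_def G'_def X_def E_def
    by (simp add: clstar_cadd clstar_clone clstar_mul clstar_vec)
  show "supp n G" "supp n G'" unfolding G_def G'_def
    by (simp_all add: cadd_supp clone_supp clmul_supp)
qed

lemma key:
  assumes r: "supp n r" and rr: "clmul n r (clstar r) = clone"
    and x: "Phi n x x = 1" and x0: "x 0 > 0"
  shows "Phi n x (act n r x) \<ge> 2 * (r {})\<^sup>2 - 1"
proof -
  define X where "X = vec_cl n x"
  define E where "E = vec_cl n e0v"
  define G where "G = cadd clone (clmul n X E)"
  define G' where "G' = cadd clone (clmul n E X)"
  define k where "k = 2 + 2 * x 0"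
  have kpos: "k > 0" unfolding k_def using x0 by simp
  note rf = rotor_facts[OF x, folded X_def E_def, folded G_def G'_def, folded k_def]
  have sX: "supp n X" and sE: "supp n E" unfolding X_def E_def by (rule vec_supp)+
  have sr': "supp n (clstar r)" using r by (rule clstar_supp)
  have GG: "\<And>Z. supp n Z \<Longrightarrow> clmul n G (clmul n G' Z) = csc k Z"
    by (simp add: clmul_assoc[symmetric] rf(1) clmul_csc_left clone_left)
  have rrZ: "\<And>Z. supp n Z \<Longrightarrow> clmul n r (clmul n (clstar r) Z) = Z"
    by (simp add: clmul_assoc[symmetric] rr clone_left)
  define C where "C = Phi n x (act n r x)"
  have C: "C = clmul n X (clmul n r (clmul n X (clstar r))) {}"
    unfolding C_def act_def re_vec[symmetric] X_def by (simp add: clmul_assoc)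
  define w where "w = clmul n G' (clmul n r G)"
  have sw: "clstar w = clmul n G' (clmul n (clstar r) G)"
    unfolding w_def by (simp add: clstar_mul rf(4) rf(5) clmul_assoc)
  have "k * k * C = clmul n (csc k X) (clmul n r (clmul n (csc k X) (clstar r))) {}"
    unfolding C by (simp add: clmul_csc_left clmul_csc_right) (simp add: csc_def)
  also have "\<dots> = clmul n G (clmul n E (clmul n G' (clmul n r (clmul n G (clmul n E (clmul n G' (clstar r))))))) {}"
    unfolding rf(3)[symmetric] by (simp add: clmul_assoc)
  also have "\<dots> = clmul n (clmul n E (clmul n G' (clmul n r (clmul n G (clmul n E (clmul n G' (clstar r))))))) G {}"
    by (rule clmul_re_comm)
  also have "\<dots> = clmul n (clmul n (clmul n E w) E) (clstar w) {}"
    unfolding sw unfolding w_def by (simp add: clmul_assoc)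
  also have "\<dots> = (\<Sum>M\<in>Pow {0..n}. (w M)\<^sup>2)"
    unfolding E_def by (rule EwE_re)
  finally have S: "k * k * C = (\<Sum>M\<in>Pow {0..n}. (w M)\<^sup>2)" .
  have "clmul n w (clstar w) {} = clmul n G' (clmul n r (clmul n G (clmul n G' (clmul n (clstar r) G)))) {}"
    unfolding sw unfolding w_def by (simp add: clmul_assoc)
  also have "\<dots> = k * k"
    by (simp add: GG clmul_supp clmul_csc_right rrZ rf(2) rf(7) sr' rf(6)) (simp add: csc_def clone_def)
  finally have N: "(\<Sum>M\<in>Pow {0..n}. (w M)\<^sup>2 * (-1) ^ card (M - {0})) = k * k"
    unfolding ww_re .
  have "w {} = clmul n (clmul n r G) G' {}"
    unfolding w_def by (rule clmul_re_comm)
  also have "\<dots> = k * r {}"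
    by (simp add: clmul_assoc rf(1) clmul_csc_right clone_right r) (simp add: csc_def)
  finally have W: "w {} = k * r {}" .
  define f where "f = (\<lambda>M::nat set. (w M)\<^sup>2 * (1 + (-1) ^ card (M - {0})))"
  have "f {} \<le> sum f (Pow {0..n})"
  proof (rule member_le_sum)
    fix M :: "nat set"
    have "(-1::real) ^ card (M - {0}) \<ge> -1" by (cases "even (card (M - {0}))") auto
    then show "0 \<le> f M" unfolding f_def by simp
  qed auto
  then have "2 * (w {})\<^sup>2 \<le> (\<Sum>M\<in>Pow {0..n}. (w M)\<^sup>2 * (1 + (-1) ^ card (M - {0})))"
    unfolding f_def by simp
  also have "\<dots> = (\<Sum>M\<in>Pow {0..n}. (w M)\<^sup>2) + (\<Sum>M\<in>Pow {0..n}. (w M)\<^sup>2 * (-1) ^ card (M - {0}))"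
    by (simp add: algebra_simps sum.distrib)
  also have "\<dots> = k * k * C + k * k" using S N by simp
  finally have "2 * (k * r {})\<^sup>2 \<le> k * k * C + k * k" unfolding W .
  then have "k * k * (2 * (r {})\<^sup>2 - 1) \<le> k * k * C" by (simp add: algebra_simps power2_eq_square)
  then have "2 * (r {})\<^sup>2 - 1 \<le> C" using kpos by (simp add: mult_le_cancel_left_pos)
  then show ?thesis unfolding C_def .
qed

lemma arcosh_double:
  assumes "(1::real) \<le> a"
  shows "arcosh (2 * a\<^sup>2 - 1) = 2 * arcosh a"
proof -
  have "cosh (2 * arcosh a) = 2 * a\<^sup>2 - 1"
    using assms by (simp add: cosh_double_cosh)
  moreover have "2 * arcosh a \<ge> 0" using assms by simp
  ultimately show ?thesis using arcosh_cosh_real by metis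
qed

theorem proposition3p1:
  fixes n :: nat and r :: cl
  assumes "r \<in> Spin n" and "loxodromic n r"
  shows "1 \<le> \<bar>re_part r\<bar> \<longrightarrow> transl_len n r \<ge> 2 * arcosh \<bar>re_part r\<bar>"
proof
  assume a1: "1 \<le> \<bar>re_part r\<bar>"
  have r: "supp n r" and rr: "clmul n r (clstar r) = clone"
    using assms(1) unfolding Spin_def supp_def by auto
  have ne: "Hyp n \<noteq> {}"
  proof -
    have "e0v \<in> Hyp n" unfolding Hyp_def in_E_def using phi_e0_e0 by (auto simp: e0v_def)
    then show ?thesis by auto
  qed
  show "transl_len n r \<ge> 2 * arcosh \<bar>re_part r\<bar>"
    unfolding transl_len_def
  proof (rule cINF_greatest[OF ne])
    fix x assume "x \<in> Hyp n"
    then have x: "Phi n x x = 1" "x 0 > 0" unfolding Hyp_def by auto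
    have c: "Phi n x (act n r x) \<ge> 2 * \<bar>re_part r\<bar>\<^sup>2 - 1"
      using key[OF r rr x] unfolding re_part_def by simp
    have one: "1 \<le> 2 * \<bar>re_part r\<bar>\<^sup>2 - 1"
    proof -
      have "1 \<le> \<bar>re_part r\<bar>\<^sup>2" using power_mono[OF a1, of 2] by simp
      then show ?thesis by simp
    qed
    have "\<not> arcosh (Phi n x (act n r x)) < arcosh (2 * \<bar>re_part r\<bar>\<^sup>2 - 1)"
      using c one by (subst arcosh_less_iff_real) auto
    then show "2 * arcosh \<bar>re_part r\<bar> \<le> hdist n x (act n r x)"
      unfolding hdist_def arcosh_double[OF a1] by simp
  qed
qed

end
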